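(* Assume that $X^\infty\cap\mathcal{K}(f)=\{0\}$. Then: (a) Problem (P) has a finite optimal value $f_*:=\inf_{x\in X}f(x)$, and $\mathrm{Sol}(P)$ is nonempty and compact. (b) Problem (P) has weak sharp minima at infinity: there exist constants $c>0$ and $R>0$ such that $$f(x)-f_*\ \ge\ c\,\mathrm{dist}(x,\mathrm{Sol}(P))\quad\text{for all } x\in X\setminus\mathbb{B}_R.$$ (c) $f$ is coercive on $X$, i.e. $f(x)\to+\infty$ whenever $x\in X$ and $\|x\|\to\infty$.
   Context: Standing assumptions: $f:\mathbb{R}^n\to\mathbb{R}\cup\{\pm\infty\}$ is proper (never $-\infty$ and finite at some point) and lower semicontinuous, with $\operatorname{dom}f=\{x:f(x)<+\infty\}$; $X\subset\mathbb{R}^n$ is a nonempty closed set with $\operatorname{dom}f\cap X$ unbounded. Problem (P) is $\inf_{x\in X}f(x)$ and $\mathrm{Sol}(P)=\{x\in X: f(x)\le f(y)\ \forall y\in X\}$. $\mathbb{B}_R$ is the open Euclidean ball of radius $R$ centered at $0$; $\mathrm{dist}(x,S)=\inf_{s\in S}\|x-s\|$. The asymptotic cone of $X$ is $X^\infty=\{u\in\mathbb{R}^n:\exists t_k\to+\infty,\ \exists x_k\in X,\ x_k/t_k\to u\}$. The asymptotic function of $f$ is $f^\infty(d)=\inf\{\liminf_{k\to\infty} f(t_kd_k)/t_k:\ t_k\to+\infty,\ d_k\to d\}$ (equivalently, $\operatorname{epi}f^\infty=(\operatorname{epi}f)^\infty$). $\mathcal{K}(f)=\{d\in\mathbb{R}^n: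 f^\infty(d)\le 0\}$. *)

theory Defs
  imports "HOL-Analysis.Analysis" "HOL-Library.Extended_Real"
begin

definition proper_fun :: "('a \<Rightarrow> ereal) \<Rightarrow> bool" where
  "proper_fun f \<longleftrightarrow> (\<forall>x. f x \<noteq> -\<infinity>) \<and> (\<exists>x. f x < \<infinity>)"

definition lsc_fun :: "('a::topological_space \<Rightarrow> ereal) \<Rightarrow> bool" where
  "lsc_fun f \<longleftrightarrow> (\<forall>x. f x \<le> Liminf (at x) f)"

definition fdom :: "('a \<Rightarrow> ereal) \<Rightarrow> 'a set" where
  "fdom f = {x. f x < \<infinity>}"

definition asym_cone :: "'a::real_normed_vector set \<Rightarrow> 'a set" where
  "asym_cone X = {u. \<exists>t::nat \<Rightarrow> real. \<exists>x::nat \<Rightarrow> 'a.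
      filterlim t at_top sequentially \<and> (\<forall>k. x k \<in> X) \<and>
      ((\<lambda>k. x k /\<^sub>R t k) \<longlonglongrightarrow> u)}"

definition asym_fun :: "('a::real_normed_vector \<Rightarrow> ereal) \<Rightarrow> 'a \<Rightarrow> ereal" where
  "asym_fun f d = Inf {liminf (\<lambda>k. f (t k *\<^sub>R dd k) / ereal (t k)) | t dd.
      filterlim t at_top sequentially \<and> (dd \<longlonglongrightarrow> d)}"

definition Kset :: "('a::real_normed_vector \<Rightarrow> ereal) \<Rightarrow> 'a set" where
  "Kset f = {d. asym_fun f d \<le> 0}"

definition SolP :: "('a \<Rightarrow> ereal) \<Rightarrow> 'a set \<Rightarrow> 'a set" where
  "SolP f X = {x \<in> X. \<forall>y\<in>X. f x \<le> f y}"

end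

theory Submission imports Defs begin

lemma lsc_seq:
  fixes f :: "'a::metric_space \<Rightarrow> ereal"
  assumes "lsc_fun f" "s \<longlonglongrightarrow> z"
  shows "f z \<le> liminf (\<lambda>k. f (s k))"
  unfolding le_Liminf_iff
proof (intro allI impI)
  fix y assume y: "y < f z"
  have "f z \<le> Liminf (at z) f" using assms(1) unfolding lsc_fun_def by blast
  then have "eventually (\<lambda>x. y < f x) (at z)" using y le_Liminf_iff by blast
  then have "eventually (\<lambda>x. x \<noteq> z \<longrightarrow> x \<in> UNIV \<longrightarrow> y < f x) (nhds z)"
    unfolding eventually_at_filter .
  then have ev: "eventually (\<lambda>x. y < f x) (nhds z)"
    by (rule eventually_mono) (use y in auto)
  have "filterlim s (nhds z) sequentially" using assms(2) .
  then show "eventually (\<lambda>k. y < f (s k)) sequentially"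
    using ev unfolding filterlim_iff by blast
qed

lemma keyA:
  fixes f :: "'a::euclidean_space \<Rightarrow> ereal" and x :: "nat \<Rightarrow> 'a"
  assumes cone: "asym_cone X \<inter> Kset f = {0}"
    and xX: "\<forall>k. x k \<in> X" and xn: "\<forall>k. real k + 1 \<le> norm (x k)"
    and fb: "\<forall>k. f (x k) \<le> ereal (B * norm (x k) / (real k + 1))"
  shows False
proof -
  define u where "u k = x k /\<^sub>R norm (x k)" for k
  have npos: "norm (x k) > 0" for k using xn[rule_format, of k] by linarith
  have "\<forall>k. u k \<in> sphere 0 1" using npos by (simp add: u_def)
  from seq_compactE[OF compact_imp_seq_compact[OF compact_sphere] this]
  obtain d r where d: "d \<in> sphere 0 1" and r: "strict_mono r" and ur: "(u \<circ> r) \<longlonglongrightarrow> d" .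
  define t where "t k = norm (x (r k))" for k
  have tpos: "t k > 0" for k using npos by (simp add: t_def)
  have "real k \<le> t k" for k
  proof -
    have "real k \<le> real (r k)" using seq_suble[OF r] by simp
    then show ?thesis using xn[rule_format, of "r k"] by (simp add: t_def)
  qed
  then have tlim: "filterlim t at_top sequentially"
    using filterlim_at_top_mono[OF filterlim_real_sequentially] by (simp add: always_eventually)
  have dcone: "d \<in> asym_cone X"
    unfolding asym_cone_def
  proof (rule CollectI, rule exI[of _ t], rule exI[of _ "\<lambda>k. x (r k)"], intro conjI)
    show "filterlim t at_top sequentially" by (rule tlim)
    show "\<forall>k. x (r k) \<in> X" using xX by blast
    have "(\<lambda>k. x (r k) /\<^sub>R t k) = u \<circ> r" by (rule ext) (simp add: u_def t_def)
    then show "(\<lambda>k. x (r k) /\<^sub>R t k) \<longlonglongrightarrow> d" using ur by simp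
  qed
  have eq: "t k *\<^sub>R (u \<circ> r) k = x (r k)" for k using tpos[of k] by (simp add: u_def t_def)
  have "asym_fun f d \<le> liminf (\<lambda>k. f (t k *\<^sub>R (u \<circ> r) k) / ereal (t k))"
    unfolding asym_fun_def by (rule Inf_lower) (use tlim ur in blast)
  also have "\<dots> \<le> liminf (\<lambda>k. ereal (B / (real (r k) + 1)))"
  proof (rule Liminf_mono, rule always_eventually, rule allI)
    fix k
    have "f (x (r k)) \<le> ereal (B * t k / (real (r k) + 1))"
      using fb by (simp add: t_def)
    then have "f (x (r k)) / ereal (t k) \<le> ereal (B * t k / (real (r k) + 1)) / ereal (t k)"
      by (rule ereal_divide_right_mono) (use tpos[of k] in simp)
    also have "\<dots> = ereal (B / (real (r k) + 1))" using tpos[of k] by simp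
    finally show "f (t k *\<^sub>R (u \<circ> r) k) / ereal (t k) \<le> ereal (B / (real (r k) + 1))"
      using eq by simp
  qed
  also have "\<dots> = 0"
  proof -
    have "(\<lambda>k. B / (real k + 1)) \<longlonglongrightarrow> 0"
      proof (rule tendsto_divide_0[OF tendsto_const], rule filterlim_at_top_imp_at_infinity)
      show "filterlim (\<lambda>k. real k + 1) at_top sequentially"
        by (rule filterlim_at_top_mono[OF filterlim_real_sequentially]) (simp add: always_eventually)
    qed
    from LIMSEQ_subseq_LIMSEQ[OF this r]
    have "((\<lambda>k. ereal (B / (real (r k) + 1))) \<longlongrightarrow> ereal 0) sequentially"
      by (simp add: o_def)
    then show ?thesis by (simp add: lim_imp_Liminf zero_ereal_def)
  qed
  finally have "d \<in> Kset f" by (simp add: Kset_def)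
  with dcone cone have "d = 0" by blast
  with d show False by simp
qed

lemma realR1:
  fixes M n :: real
  assumes "real k + 1 \<le> n"
  shows "M \<le> \<bar>M\<bar> * n / (real k + 1)"
proof -
  have q: "0 < real k + 1" by simp
  have "1 \<le> n / (real k + 1)" using assms by (simp only: le_divide_eq_1_pos[OF q])
  then have "\<bar>M\<bar> * 1 \<le> \<bar>M\<bar> * (n / (real k + 1))" by (rule mult_left_mono) simp
  moreover have "M \<le> \<bar>M\<bar> * 1" by simp
  moreover have "\<bar>M\<bar> * (n / (real k + 1)) = \<bar>M\<bar> * n / (real k + 1)" by (rule times_divide_eq_right)
  ultimately show ?thesis by linarith
qed

lemma realR2:
  fixes n d s w \<mu> :: real
  assumes "real k + 1 \<le> n" "d \<le> n + s" "0 \<le> s" "w - \<mu> < 1 / (real k + 1) * d"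
  shows "w \<le> (\<bar>\<mu>\<bar> + s + 1) * n / (real k + 1)"
proof -
  define q where "q = real k + 1"
  have q: "q > 0" "q \<le> n" using assms(1) by (auto simp: q_def)
  have "w * q < d + \<mu> * q" using assms(4) q unfolding q_def[symmetric]
    by (simp add: field_simps)
  also have "\<dots> \<le> n + s + \<bar>\<mu>\<bar> * q"
  proof -
    have "\<mu> * q \<le> \<bar>\<mu>\<bar> * q" using q(1) by (intro mult_right_mono) auto
    then show ?thesis using assms(2) by linarith
  qed
  also have "\<dots> \<le> n + s * n + \<bar>\<mu>\<bar> * n"
  proof -
    have "s * 1 \<le> s * n" using q assms(3) assms(1) by (intro mult_left_mono) auto
    moreover have "\<bar>\<mu>\<bar> * q \<le> \<bar>\<mu>\<bar> * n" using q by (intro mult_left_mono) auto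
    ultimately show ?thesis by simp
  qed
  finally have "w * q \<le> (\<bar>\<mu>\<bar> + s + 1) * n" by (simp add: algebra_simps)
  then show ?thesis using q unfolding q_def[symmetric] by (simp add: pos_le_divide_eq)
qed

theorem mainTheorem1:
  fixes f :: "'a::euclidean_space \<Rightarrow> ereal" and X :: "'a set"
  assumes "proper_fun f" and "lsc_fun f"
    and "closed X" and "X \<noteq> {}" and "\<not> bounded (fdom f \<inter> X)"
    and "asym_cone X \<inter> Kset f = {0}"
  shows "(\<exists>r::real. (INF x\<in>X. f x) = ereal r)
       \<and> SolP f X \<noteq> {} \<and> compact (SolP f X)
       \<and> (\<exists>c>0. \<exists>R>0. \<forall>x\<in>X - ball 0 R.
            ereal (c * infdist x (SolP f X)) \<le> f x - (INF y\<in>X. f y))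
       \<and> (\<forall>M::real. \<exists>r. \<forall>x\<in>X. r \<le> norm x \<longrightarrow> ereal M \<le> f x)"
proof -
  note hprop = assms(1) and lsc = assms(2) and clX = assms(3) and cone = assms(6)
  have nminf: "f x \<noteq> -\<infinity>" for x using hprop unfolding proper_fun_def by blast
  have "fdom f \<inter> X \<noteq> {}" using assms(5) by auto
  then obtain x0 where x0: "x0 \<in> X" "f x0 < \<infinity>"
    unfolding fdom_def by auto
  obtain v where v: "f x0 = ereal v" using x0(2) nminf[of x0] by (cases "f x0") auto
  have coer: "\<forall>M::real. \<exists>r. \<forall>x\<in>X. r \<le> norm x \<longrightarrow> ereal M \<le> f x"
  proof (rule allI, rule ccontr)
    fix M :: real
    assume "\<not> (\<exists>r. \<forall>x\<in>X. r \<le> norm x \<longrightarrow> ereal M \<le> f x)"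
    note nM = this
    have "\<forall>k::nat. \<exists>y. y \<in> X \<and> real k + 1 \<le> norm y \<and> f y < ereal M"
    proof
      fix k :: nat
      have "\<not> (\<forall>x\<in>X. real k + 1 \<le> norm x \<longrightarrow> ereal M \<le> f x)" using nM by blast
      then show "\<exists>y. y \<in> X \<and> real k + 1 \<le> norm y \<and> f y < ereal M" by (auto simp: not_le)
    qed
    then obtain x where x: "\<And>k. x k \<in> X" "\<And>k. real k + 1 \<le> norm (x k)" "\<And>k. f (x k) < ereal M"
      by metis
    have "\<forall>k. f (x k) \<le> ereal (\<bar>M\<bar> * norm (x k) / (real k + 1))"
    proof
      fix k
      have "f (x k) \<le> ereal M" using x(3)[of k] by simp
      also have "\<dots> \<le> ereal (\<bar>M\<bar> * norm (x k) / (real k + 1))"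
        using realR1[OF x(2)[of k], of M] by simp
      finally show "f (x k) \<le> ereal (\<bar>M\<bar> * norm (x k) / (real k + 1))" .
    qed
    moreover have "\<forall>k. x k \<in> X" "\<forall>k. real k + 1 \<le> norm (x k)" using x by auto
    ultimately show False using keyA[OF cone] by blast
  qed
  obtain R0 where R0: "\<And>x. x \<in> X \<Longrightarrow> R0 \<le> norm x \<Longrightarrow> ereal (v + 1) \<le> f x"
    using coer by blast
  define m where "m = (INF x\<in>X. f x)"
  have mle: "m \<le> f x" if "x \<in> X" for x using that unfolding m_def by (rule INF_lower)
  have mv: "m \<le> ereal v" using mle[OF x0(1)] v by simp
  define a where "a k = (if m = -\<infinity> then ereal (v - real k) else m + ereal (1 / (real k + 2)))" for k
  have mfin: "m = -\<infinity> \<or> (\<exists>\<mu>. m = ereal \<mu>)" using mv by (cases m) auto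
  have ma: "m < a k" for k
  proof (cases "m = -\<infinity>")
    case True then show ?thesis by (simp add: a_def)
  next
    case False
    then obtain \<mu> where "m = ereal \<mu>" using mfin by blast
    then show ?thesis by (simp add: a_def)
  qed
  have av: "a k \<le> ereal (v + 1/2)" for k
  proof (cases "m = -\<infinity>")
    case True then show ?thesis by (simp add: a_def)
  next
    case False
    then obtain \<mu> where mu: "m = ereal \<mu>" using mfin by blast
    have h: "1 / (real k + 2) \<le> 1/2" by (simp add: field_simps)
    have "\<mu> \<le> v" using mu mv by simp
    with h have "\<mu> + 1 / (real k + 2) \<le> v + 1/2" by linarith
    then show ?thesis by (simp add: a_def mu)
  qed
  have amono: "a k \<le> a j" if "j \<le> k" for j k
  proof (cases "m = -\<infinity>")
    case True then show ?thesis using that by (simp add: a_def)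
  next
    case False
    then obtain \<mu> where mu: "m = ereal \<mu>" using mfin by blast
    have "1 / (real k + 2) \<le> 1 / (real j + 2)" using that by (simp add: frac_le)
    then show ?thesis using mu False by (simp add: a_def)
  qed
  have "\<forall>k. \<exists>y\<in>X. f y < a k" using ma unfolding m_def by (simp add: INF_less_iff)
  then obtain y where y: "\<And>k. y k \<in> X" "\<And>k. f (y k) < a k" by metis
  have ynorm: "y k \<in> cball 0 \<bar>R0\<bar>" for k
  proof (rule ccontr)
    assume "y k \<notin> cball 0 \<bar>R0\<bar>"
    then have "R0 \<le> norm (y k)" by auto
    then have "ereal (v + 1) \<le> f (y k)" using R0 y(1) by blast
    moreover have "f (y k) < ereal (v + 1/2)" using y(2)[of k] av[of k] by (meson less_le_trans)
    ultimately have "ereal (v + 1) < ereal (v + 1/2)" by (rule le_less_trans)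
    then show False by simp
  qed
  obtain z r where z: "z \<in> cball 0 \<bar>R0\<bar>" and r: "strict_mono r" and yr: "(y \<circ> r) \<longlonglongrightarrow> z"
    using seq_compactE[OF compact_imp_seq_compact[OF compact_cball]] ynorm by metis
  have zX: "z \<in> X" using closed_sequentially[OF clX _ yr] y(1) by simp
  have fza: "f z \<le> a k0" for k0
  proof -
    have "f z \<le> liminf (\<lambda>k. f ((y \<circ> r) k))" by (rule lsc_seq[OF lsc yr])
    also have "\<dots> \<le> liminf (\<lambda>k. a k0)"
    proof (rule Liminf_mono)
      show "eventually (\<lambda>k. f ((y \<circ> r) k) \<le> a k0) sequentially"
        unfolding eventually_sequentially
      proof (intro exI allI impI)
        fix k assume "k0 \<le> k"
        then have "k0 \<le> r k" using seq_suble[OF r, of k] by linarith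
        then show "f ((y \<circ> r) k) \<le> a k0" using y(2)[of "r k"] amono[of k0 "r k"] by simp
      qed
    qed
    also have "\<dots> = a k0" by (simp add: Liminf_const)
    finally show ?thesis .
  qed
  obtain w where w: "f z = ereal w"
    using fza[of 0] av[of 0] nminf[of z] by (cases "f z") auto
  obtain \<mu> where mu: "m = ereal \<mu>"
  proof (cases "m = -\<infinity>")
    case True
    obtain k :: nat where "v - w < real k" using reals_Archimedean2 by blast
    then have "ereal (v - real k) < ereal w" by simp
    then show ?thesis using fza[of k] True w by (simp add: a_def)
  next
    case False then show ?thesis using mfin that by blast
  qed
  have wmu: "w \<le> \<mu>"
  proof (rule ccontr)
    assume "\<not> w \<le> \<mu>"
    then obtain n where n: "inverse (real (Suc n)) < w - \<mu>" using reals_Archimedean[of "w - \<mu>"] by auto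
    have "1 / (real n + 2) \<le> inverse (real (Suc n))" by (simp add: field_simps)
    then have "\<mu> + 1 / (real n + 2) < w" using n by linarith
    then show False using fza[of n] w mu by (simp add: a_def)
  qed
  have fzm: "f z = m" using mle[OF zX] w mu wmu by simp
  define S where "S = SolP f X"
  have zS: "z \<in> S" unfolding S_def SolP_def using zX fzm mle by auto
  have Sle: "f x \<le> ereal \<mu>" if "x \<in> S" for x
    using that zX fzm mu unfolding S_def SolP_def by auto
  have Sbd: "bounded S"
  proof (rule bounded_subset[OF bounded_cball[of 0 "\<bar>R0\<bar>"]], rule subsetI, rule ccontr)
    fix x assume xS: "x \<in> S" and "x \<notin> cball 0 \<bar>R0\<bar>"
    then have "R0 \<le> norm x" by auto
    moreover have "x \<in> X" using xS unfolding S_def SolP_def by auto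
    ultimately have "ereal (v + 1) \<le> f x" using R0 by blast
    moreover have "ereal \<mu> \<le> ereal v" using mu mv by simp
    ultimately have "ereal (v + 1) \<le> ereal v" using Sle[OF xS] by (meson order_trans)
    then show False by simp
  qed
  have Scl: "closed S"
    unfolding closed_sequential_limits
  proof (intro allI impI, elim conjE)
    fix s l assume sS: "\<forall>n. s n \<in> S" and sl: "s \<longlonglongrightarrow> l"
    have lX: "l \<in> X" using closed_sequentially[OF clX _ sl] sS unfolding S_def SolP_def by auto
    have "f l \<le> liminf (\<lambda>k. f (s k))" by (rule lsc_seq[OF lsc sl])
    also have "\<dots> \<le> liminf (\<lambda>k. ereal \<mu>)" by (rule Liminf_mono[OF always_eventually]) (use sS Sle in blast)
    also have "\<dots> = ereal \<mu>" by (simp add: Liminf_const)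
    finally have "f l \<le> m" using mu by simp
    then have "\<forall>y'\<in>X. f l \<le> f y'" using mle order_trans by blast
    then show "l \<in> S" unfolding S_def SolP_def using lX by blast
  qed
  have wsm: "\<exists>c>0. \<exists>R>0. \<forall>x\<in>X - ball 0 R. ereal (c * infdist x S) \<le> f x - m"
  proof (rule ccontr)
    assume H: "\<not> ?thesis"
    have "\<forall>k::nat. \<exists>x. x \<in> X \<and> real k + 1 \<le> norm x \<and>
        \<not> ereal (1 / (real k + 1) * infdist x S) \<le> f x - m"
    proof
      fix k :: nat
      have "\<not> (\<forall>x\<in>X - ball 0 (real k + 1). ereal (1 / (real k + 1) * infdist x S) \<le> f x - m)"
      proof
        assume A: "\<forall>x\<in>X - ball 0 (real k + 1). ereal (1 / (real k + 1) * infdist x S) \<le> f x - m"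
        have "\<exists>c>0. \<exists>R>0. \<forall>x\<in>X - ball 0 R. ereal (c * infdist x S) \<le> f x - m"
          by (rule exI[of _ "1/(real k+1)"], rule conjI, simp, rule exI[of _ "real k + 1"],
              rule conjI, simp, rule A)
        then show False using H by blast
      qed
      then show "\<exists>x. x \<in> X \<and> real k + 1 \<le> norm x \<and>
        \<not> ereal (1 / (real k + 1) * infdist x S) \<le> f x - m" by auto
    qed
    then obtain x where x: "\<And>k. x k \<in> X" "\<And>k. real k + 1 \<le> norm (x k)"
      "\<And>k. \<not> ereal (1 / (real k + 1) * infdist (x k) S) \<le> f (x k) - m" by metis
    have "\<forall>k. f (x k) \<le> ereal ((\<bar>\<mu>\<bar> + norm z + 1) * norm (x k) / (real k + 1))"
    proof
      fix k
      obtain wk where wk: "f (x k) = ereal wk"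
        using x(3)[of k] nminf[of "x k"] mu by (cases "f (x k)") auto
      have lt: "wk - \<mu> < 1 / (real k + 1) * infdist (x k) S" using x(3)[of k] wk mu by simp
      have "infdist (x k) S \<le> dist (x k) z" by (rule infdist_le[OF zS])
      also have "\<dots> \<le> norm (x k) + norm z" by (simp add: dist_norm norm_triangle_ineq4)
      finally have "wk \<le> (\<bar>\<mu>\<bar> + norm z + 1) * norm (x k) / (real k + 1)"
        using realR2[OF x(2)[of k] _ norm_ge_zero lt] by blast
      then show "f (x k) \<le> ereal ((\<bar>\<mu>\<bar> + norm z + 1) * norm (x k) / (real k + 1))"
        using wk by simp
    qed
    moreover have "\<forall>k. x k \<in> X" "\<forall>k. real k + 1 \<le> norm (x k)" using x by auto
    ultimately show False using keyA[OF cone] by blast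
  qed
  have "compact S" using Sbd Scl by (simp add: compact_eq_bounded_closed)
  moreover have "S \<noteq> {}" using zS by blast
  ultimately show ?thesis
    using mu wsm coer unfolding m_def S_def by blast
qed

end
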